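(* The size $z_{78}$ of the LZ78 factorization satisfies (the alphabet being allowed to contain as many distinct characters as needed): substitutions: $\mathsf{MS}_{\mathrm{sub}}(z_{78},n)=\Omega(n^{1/4})$, $\mathsf{AS}_{\mathrm{sub}}(z_{78},n)=\Omega(z_{78}^{3/2})$ and $\mathsf{AS}_{\mathrm{sub}}(z_{78},n)=\Omega(n^{3/4})$; deletions: $\mathsf{MS}_{\mathrm{del}}(z_{78},n)=\Omega(n^{1/4})$, $\mathsf{AS}_{\mathrm{del}}(z_{78},n)=\Omega(z_{78}^{3/2})$ and $\mathsf{AS}_{\mathrm{del}}(z_{78},n)=\Omega(n^{3/4})$.
   Context: $\mathsf{ed}$ is the edit distance. $\mathsf{MS}_{\mathrm{sub}}(C,n)=\max_{T\in\Sigma^n}\{C(T')/C(T): T'\in\Sigma^n,\ \mathsf{ed}(T,T')=1\}$, $\mathsf{MS}_{\mathrm{del}}$ analogous for $T'\in\Sigma^{n-1}$, and $\mathsf{AS}_\ast$ analogous with $C(T')-C(T)$. The bound $\Omega(z_{78}^{3/2})$ is in terms of $z_{78}(T)$ of the original string. The LZ78 factorization of $T$ is $T=f_1\cdots f_z$ where, with $f_0=\varepsilon$, for each $1\le i<z$ the factor $f_i$ is the longest prefix of $f_i\cdots f_z$ such that $f_i[1..|f_i|-1]=f_j$ for some $0\le j<i$, and $f_z$ is the remaining suffix; $z_{78}(T)=z$. *)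

theory Defs
  imports Complex_Main "HOL-Library.Landau_Symbols"
begin

fun ed :: "'a list \<Rightarrow> 'a list \<Rightarrow> nat" where
  "ed [] ys = length ys"
| "ed (x # xs) [] = Suc (length xs)"
| "ed (x # xs) (y # ys) =
     min (min (ed xs (y # ys) + 1) (ed (x # xs) ys + 1))
         (ed xs ys + (if x = y then 0 else 1))"

text \<open>D is the list of factors produced so far (f_1..f_{i-1});
  the empty factor f_0 is always available.
  The fuel argument only ensures termination (each step consumes at least one symbol).\<close>

fun lz78_aux :: "nat \<Rightarrow> 'a list list \<Rightarrow> 'a list \<Rightarrow> 'a list list" where
  "lz78_aux 0 D s = []"
| "lz78_aux (Suc m) D s =
     (if s = [] then []
      else (let k = (GREATEST k. 1 \<le> k \<and> k \<le> length s \<and>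
                                 butlast (take k s) \<in> set ([] # D));
                f = take k s
            in f # lz78_aux m (D @ [f]) (drop k s)))"

definition lz78 :: "'a list \<Rightarrow> 'a list list" where
  "lz78 T = lz78_aux (length T) [] T"

definition z78 :: "'a list \<Rightarrow> nat" where
  "z78 T = length (lz78 T)"

definition MS_sub :: "('a list \<Rightarrow> nat) \<Rightarrow> nat \<Rightarrow> real" where
  "MS_sub C n = Sup {real (C T') / real (C T) | T T'.
      length T = n \<and> length T' = n \<and> ed T T' = 1}"

definition MS_del :: "('a list \<Rightarrow> nat) \<Rightarrow> nat \<Rightarrow> real" where
  "MS_del C n = Sup {real (C T') / real (C T) | T T'.
      length T = n \<and> length T' = n - 1 \<and> ed T T' = 1}"

definition AS_sub :: "('a list \<Rightarrow> nat) \<Rightarrow> nat \<Rightarrow> real" where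
  "AS_sub C n = Sup {real (C T') - real (C T) | T T'.
      length T = n \<and> length T' = n \<and> ed T T' = 1}"

definition AS_del :: "('a list \<Rightarrow> nat) \<Rightarrow> nat \<Rightarrow> real" where
  "AS_del C n = Sup {real (C T') - real (C T) | T T'.
      length T = n \<and> length T' = n - 1 \<and> ed T T' = 1}"

end

theory Submission imports Defs begin

definition pre :: "'a list \<Rightarrow> 'a list \<Rightarrow> bool" where
  "pre f w \<longleftrightarrow> (\<exists>t. w = f @ t)"

definition good :: "'a list list \<Rightarrow> 'a list \<Rightarrow> bool" where
  "good D f \<longleftrightarrow> f \<noteq> [] \<and> butlast f \<in> set ([] # D) \<and> (\<forall>w\<in>set D. \<not> pre f w)"

fun good_seq :: "'a list list \<Rightarrow> 'a list list \<Rightarrow> bool" where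
  "good_seq D [] = True"
| "good_seq D (f # fs) = (good D f \<and> good_seq (D @ [f]) fs)"

lemma lz_step:
  assumes g: "good D f"
  shows "lz78_aux (Suc m) D (f @ r) = f # lz78_aux m (D @ [f]) r"
proof -
  let ?s = "f @ r"
  let ?P = "\<lambda>k. 1 \<le> k \<and> k \<le> length ?s \<and> butlast (take k ?s) \<in> set ([] # D)"
  have fne: "f \<noteq> []" using g by (simp add: good_def)
  have P1: "?P (length f)" using g fne by (simp add: good_def Suc_leI)
  have P2: "y \<le> length f" if "?P y" for y
  proof (rule ccontr)
    assume "\<not> y \<le> length f"
    hence gt: "y > length f" by simp
    have tk: "take y ?s = f @ take (y - length f) r" using gt by simp
    have ne: "take (y - length f) r \<noteq> []" using gt that by auto
    have "butlast (take y ?s) = f @ butlast (take (y - length f) r)"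
      using tk ne by (simp add: butlast_append)
    moreover have "butlast (take y ?s) \<in> set ([] # D)" using that by simp
    ultimately have "f @ butlast (take (y - length f) r) \<in> set D" using fne by auto
    moreover have "\<forall>w\<in>set D. \<not> pre f w" using g by (simp add: good_def)
    ultimately show False by (auto simp: pre_def)
  qed
  have G: "(GREATEST k. ?P k) = length f"
    by (rule Greatest_equality[where P="?P"]) (rule P1, rule P2)
  have ne: "?s \<noteq> []" using fne by simp
  have "lz78_aux (Suc m) D ?s = (let k = (GREATEST k. ?P k); f' = take k ?s
            in f' # lz78_aux m (D @ [f']) (drop k ?s))"
    by (simp only: lz78_aux.simps(2) if_not_P[OF ne])
  also have "\<dots> = f # lz78_aux m (D @ [f]) r" unfolding G Let_def by simp
  finally show ?thesis .
qed

lemma lz_nil: "lz78_aux m D [] = []"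
  by (cases m) auto

lemma good_seq_append: "good_seq D (xs @ ys) \<longleftrightarrow> good_seq D xs \<and> good_seq (D @ xs) ys"
  by (induction xs arbitrary: D) auto

lemma lz_many:
  assumes "good_seq D fs" "length (concat fs) + length r \<le> m"
  shows "lz78_aux m D (concat fs @ r) = fs @ lz78_aux (m - length fs) (D @ fs) r"
  using assms
proof (induction fs arbitrary: D m)
  case Nil thus ?case by simp
next
  case (Cons f fs)
  have g: "good D f" and gs: "good_seq (D @ [f]) fs" using Cons.prems by auto
  have fne: "f \<noteq> []" using g by (simp add: good_def)
  then obtain m' where m: "m = Suc m'" using Cons.prems(2) by (cases m) auto
  have len: "length (concat fs) + length r \<le> m'"
    using Cons.prems(2) fne m by (cases f) auto
  have "lz78_aux m D (concat (f # fs) @ r) = f # lz78_aux m' (D @ [f]) (concat fs @ r)"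
    using lz_step[OF g, of m' "concat fs @ r"] m by simp
  also have "\<dots> = f # fs @ lz78_aux (m' - length fs) (D @ [f] @ fs) r"
    using Cons.IH[OF gs len] by simp
  finally show ?case using m by simp
qed

lemma z78_good: "good_seq [] fs \<Longrightarrow> z78 (concat fs) = length fs"
  unfolding z78_def lz78_def using lz_many[of "[]" fs "[]" "length (concat fs)"]
  by (simp add: lz_nil)

lemma lz_len: "length (lz78_aux m D s) \<le> m"
proof (induction m arbitrary: D s)
  case 0 thus ?case by simp
next
  case (Suc m)
  show ?case
  proof (cases "s = []")
    case True thus ?thesis by simp
  next
    case False
    have "lz78_aux (Suc m) D s = (let k = (GREATEST k. 1 \<le> k \<and> k \<le> length s \<and>
                                 butlast (take k s) \<in> set ([] # D)); f = take k s
            in f # lz78_aux m (D @ [f]) (drop k s))"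
      by (simp only: lz78_aux.simps(2) if_not_P[OF False])
    thus ?thesis using Suc.IH unfolding Let_def by simp
  qed
qed

lemma z78_le: "z78 T \<le> length T"
  unfolding z78_def lz78_def by (rule lz_len)

lemma good_seq_all:
  assumes "\<And>xs f ys. G = xs @ f # ys \<Longrightarrow> good (D @ xs) f"
  shows "good_seq D G"
  using assms
proof (induction G arbitrary: D)
  case Nil thus ?case by simp
next
  case (Cons g gs)
  have "good D g" using Cons.prems[of "[]" g gs] by simp
  moreover have "good_seq (D @ [g]) gs"
  proof (rule Cons.IH)
    fix xs f ys assume "gs = xs @ f # ys"
    hence "g # gs = (g # xs) @ f # ys" by simp
    from Cons.prems[OF this] show "good ((D @ [g]) @ xs) f" by simp
  qed
  ultimately show ?case by simp
qed

lemma upt_decomp: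
  assumes "[a..<c] = pr @ b # post"
  shows "pr = [a..<b] \<and> a \<le> b \<and> b < c"
proof -
  have l: "length pr < c - a" using arg_cong[OF assms, of length] by simp
  have b: "b = a + length pr"
    using arg_cong[OF assms, of "\<lambda>l. l ! length pr"] l by (simp add: nth_append)
  have "pr = take (length pr) [a..<c]" using assms by simp
  also have "\<dots> = [a..<b]" using b l by (simp add: take_upt)
  finally show ?thesis using b l by simp
qed

lemma good_seq_concat_upt:
  assumes "\<And>b xs f ys. a \<le> b \<Longrightarrow> b < c \<Longrightarrow> F b = xs @ f # ys \<Longrightarrow>
            good (D @ concat (map F [a..<b]) @ xs) f"
  shows "good_seq D (concat (map F [a..<c]))"
  using assms
proof (induction c)
  case 0 thus ?case by simp
next
  case (Suc c)
  show ?case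
  proof (cases "a \<le> c")
    case False
    hence "[a..<Suc c] = []" by simp
    thus ?thesis by simp
  next
    case True
    have "good_seq D (concat (map F [a..<c]))"
      by (rule Suc.IH) (use Suc.prems in auto)
    moreover have "good_seq (D @ concat (map F [a..<c])) (F c)"
    proof (rule good_seq_all)
      fix xs f ys assume "F c = xs @ f # ys"
      thus "good ((D @ concat (map F [a..<c])) @ xs) f" using Suc.prems[of c xs f ys] True by simp
    qed
    ultimately show ?thesis using True by (simp add: good_seq_append)
  qed
qed


lemma ed_refl: "ed xs xs = 0"
  by (induction xs) auto

lemma ed_zero: "ed xs ys = 0 \<Longrightarrow> xs = ys"
proof (induction xs ys rule: ed.induct)
  case (1 ys) thus ?case by simp
next
  case (2 x xs) thus ?case by simp
next
  case (3 x xs y ys)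
  from "3.prems" have "ed xs ys + (if x = y then 0 else 1) = 0"
    by (simp add: min_def split: if_splits)
  thus ?case using "3.IH" by (simp split: if_splits)
qed

lemma ed_sub: "x \<noteq> y \<Longrightarrow> ed (x # xs) (y # xs) = 1"
proof -
  assume "x \<noteq> y"
  have "ed (x # xs) (y # xs) = min (min (ed xs (y # xs) + 1) (ed (x # xs) xs + 1))
         (ed xs xs + (if x = y then 0 else 1))" by (rule ed.simps(3))
  also have "\<dots> \<le> ed xs xs + (if x = y then 0 else 1)" by (rule min.cobounded2)
  finally have "ed (x # xs) (y # xs) \<le> ed xs xs + (if x = y then 0 else 1)" .
  hence "ed (x # xs) (y # xs) \<le> 1" using \<open>x \<noteq> y\<close> by (simp add: ed_refl)
  moreover have "ed (x # xs) (y # xs) \<noteq> 0" using ed_zero \<open>x \<noteq> y\<close> by blast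
  ultimately show ?thesis by linarith
qed

lemma ed_del: "ed (x # xs) xs = 1"
proof (cases xs)
  case Nil thus ?thesis by simp
next
  case (Cons y ys)
  have "ed (x # xs) xs \<le> 1" using Cons by (simp add: ed_refl)
  moreover have "ed (x # xs) xs \<noteq> 0" using ed_zero by (metis impossible_Cons le_refl)
  ultimately show ?thesis by linarith
qed

definition uu :: "nat \<Rightarrow> nat" where "uu j = 5 * j"
definition yy :: "nat \<Rightarrow> nat" where "yy j = 5 * j + 1"
definition ee :: "nat \<Rightarrow> nat" where "ee j = 5 * j + 2"
definition aa :: nat where "aa = 3"
definition pp :: "nat \<Rightarrow> nat" where "pp j = 5 * j + 4"

lemma letters_distinct[simp]:
  "uu i \<noteq> yy j" "yy j \<noteq> uu i" "uu i \<noteq> ee j" "ee j \<noteq> uu i" "uu i \<noteq> aa" "aa \<noteq> uu i"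
  "uu i \<noteq> pp j" "pp j \<noteq> uu i" "yy i \<noteq> ee j" "ee j \<noteq> yy i" "yy i \<noteq> aa" "aa \<noteq> yy i"
  "yy i \<noteq> pp j" "pp j \<noteq> yy i" "ee i \<noteq> aa" "aa \<noteq> ee i" "ee i \<noteq> pp j" "pp j \<noteq> ee i"
  "aa \<noteq> pp j" "pp j \<noteq> aa"
  unfolding uu_def yy_def ee_def aa_def pp_def by presburger+

lemma letters_inj[simp]:
  "uu i = uu j \<longleftrightarrow> i = j" "yy i = yy j \<longleftrightarrow> i = j" "ee i = ee j \<longleftrightarrow> i = j"
  "pp i = pp j \<longleftrightarrow> i = j"
  unfolding uu_def yy_def ee_def pp_def by auto

lemma range_disj[simp]:
  "ee j \<notin> range uu" "ee j \<notin> range yy" "yy j \<notin> range uu" "uu j \<notin> range yy"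
  "aa \<notin> range uu" "aa \<notin> range yy" "pp j \<notin> range uu" "pp j \<notin> range yy"
  "aa \<notin> range ee" "pp j \<notin> range ee"
  by (auto simp del: letters_distinct simp add: letters_distinct[symmetric])

definition iv :: "nat \<Rightarrow> nat \<Rightarrow> nat list" where "iv s l = map yy [s..<s+l]"
definition uw :: "nat \<Rightarrow> nat list" where "uw i = map uu [1..<Suc i]"

lemma iv_len[simp]: "length (iv s l) = l" by (simp add: iv_def)
lemma uw_len[simp]: "length (uw i) = i" by (simp add: uw_def)
lemma iv_ne[simp]: "iv s l = [] \<longleftrightarrow> l = 0" by (auto simp add: iv_def)
lemma uw_ne[simp]: "uw i = [] \<longleftrightarrow> i = 0" by (simp add: uw_def)
lemma iv_hd[simp]: "0 < l \<Longrightarrow> hd (iv s l) = yy s" by (simp add: iv_def upt_rec)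
lemma uw_hd[simp]: "0 < i \<Longrightarrow> hd (uw i) = uu 1" by (simp add: uw_def upt_rec)
lemma iv_set: "set (iv s l) = yy ` {s..<s+l}" by (simp add: iv_def)
lemma uw_set: "set (uw i) = uu ` {1..<Suc i}" unfolding uw_def by (simp only: set_map set_upt)
lemma iv_append: "iv s l1 @ iv (s + l1) l2 = iv s (l1 + l2)"
proof -
  have "[s..<s + l1 + l2] = [s..<s + l1] @ [s + l1..<s + l1 + l2]"
    by (rule upt_add_eq_append) simp
  thus ?thesis unfolding iv_def by (simp add: add.assoc)
qed
lemma iv_butlast: "butlast (iv s l) = iv s (l - 1)"
  unfolding iv_def by (cases l) (simp_all add: map_butlast[symmetric])
lemma uw_butlast: "butlast (uw i) = uw (i - 1)"
  unfolding uw_def by (cases i) (simp_all add: map_butlast[symmetric])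
lemma iv_Suc: "iv s (Suc l) = yy s # iv (Suc s) l"
  unfolding iv_def by (simp add: upt_rec)
lemma uw_Suc: "uw (Suc i) = uw i @ [uu (Suc i)]"
  unfolding uw_def by simp

lemma butlast_rep: "butlast (replicate n x) = replicate (n - 1) x"
proof (cases n)
  case 0 thus ?thesis by simp
next
  case (Suc k)
  have "butlast (replicate (Suc k) x) = replicate k x"
    by (metis butlast_snoc replicate_Suc replicate_append_same)
  thus ?thesis using Suc by simp
qed

lemma pre_hd: "pre f w \<Longrightarrow> f \<noteq> [] \<Longrightarrow> hd w = hd f"
  unfolding pre_def by auto
lemma pre_len: "pre f w \<Longrightarrow> length f \<le> length w"
  unfolding pre_def by auto
lemma pre_set: "pre f w \<Longrightarrow> set f \<subseteq> set w"
  unfolding pre_def by auto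
lemma pre_snoc: "pre f (v @ [c]) \<Longrightarrow> c \<notin> set f \<Longrightarrow> pre f v"
  unfolding pre_def by (metis append_butlast_last_id append_is_Nil_conv butlast_append butlast_snoc
      in_set_conv_decomp last_appendR last_snoc list.distinct(1))


section \<open>Phases\<close>

fun base :: "nat \<Rightarrow> nat" where
  "base 0 = 2"
| "base (Suc m) = base m + m"

definition phase :: "nat \<Rightarrow> nat" where
  "phase b = (LEAST m. b < base (Suc m))"

lemma base_mono: "m1 \<le> m2 \<Longrightarrow> base m1 \<le> base m2"
  by (induction m2) (auto simp: le_Suc_eq)

lemma base_ge: "Suc (Suc m) \<le> base (Suc m)"
  by (induction m) auto

lemma base_closed: "2 * base m + m = m * m + 4"
  by (induction m) (auto simp: algebra_simps)

lemma phase_props: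
  assumes "2 \<le> b"
  shows "1 \<le> phase b \<and> base (phase b) \<le> b \<and> b < base (phase b) + phase b"
proof -
  have ex: "b < base (Suc b)" using base_ge[of b] by simp
  have L: "b < base (Suc (phase b))" unfolding phase_def by (rule LeastI[of _ b]) (rule ex)
  show ?thesis
  proof (cases "phase b")
    case 0
    with L assms show ?thesis by simp
  next
    case (Suc m')
    have "\<not> b < base (Suc m')"
    proof
      assume "b < base (Suc m')"
      hence "phase b \<le> m'" unfolding phase_def by (rule Least_le)
      with Suc show False by simp
    qed
    with Suc L show ?thesis by simp
  qed
qed

lemma phase_eq:
  assumes "1 \<le> m" "base m \<le> b" "b < base m + m"
  shows "phase b = m"
  unfolding phase_def
proof (rule Least_equality)
  show "b < base (Suc m)" using assms by simp
next
  fix y assume "b < base (Suc y)"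
  show "m \<le> y"
  proof (rule ccontr)
    assume "\<not> m \<le> y"
    hence "Suc y \<le> m" by simp
    hence "base (Suc y) \<le> base m" by (rule base_mono)
    with \<open>b < base (Suc y)\<close> assms show False by simp
  qed
qed

lemma phase_mono: "b' \<le> b \<Longrightarrow> phase b' \<le> phase b"
proof -
  assume "b' \<le> b"
  have ex: "b < base (Suc b)" using base_ge[of b] by simp
  have L: "b < base (Suc (phase b))" unfolding phase_def by (rule LeastI[of _ b]) (rule ex)
  hence "b' < base (Suc (phase b))" using \<open>b' \<le> b\<close> by simp
  thus ?thesis unfolding phase_def[of b'] by (rule Least_le)
qed

lemma phase_le: "b < base (Suc m) \<Longrightarrow> phase b \<le> m"
  unfolding phase_def by (rule Least_le)

lemma witness:
  assumes m: "1 \<le> m" and s: "base (Suc m) \<le> s" and sM: "s + m \<le> M + 1"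
  shows "\<exists>b' j. base m \<le> b' \<and> b' < base m + m \<and> s = b' + 1 + j * m \<and> j < (M - b') div m"
proof -
  define x where "x = s - 1 - base m"
  define t where "t = x mod m"
  define j where "j = x div m"
  have sx: "s = base m + 1 + x" using s m unfolding x_def by simp
  have xd: "x = j * m + t" unfolding j_def t_def by simp
  have tm: "t < m" unfolding t_def using m by simp
  have e: "s = (base m + t) + 1 + j * m" using sx xd by simp
  have "(Suc j) * m \<le> M - (base m + t)" using e sM by simp
  hence "Suc j \<le> (M - (base m + t)) div m"
    using m by (simp only: less_eq_div_iff_mult_less_eq)
  hence "j < (M - (base m + t)) div m" by simp
  thus ?thesis using e tm by (intro exI[of _ "base m + t"] exI[of _ j]) simp
qed

definition pc :: "nat \<Rightarrow> nat \<Rightarrow> nat \<Rightarrow> nat list" where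
  "pc b m j = iv (b + 1 + j * m) m"

definition lastw :: "nat \<Rightarrow> nat \<Rightarrow> nat list" where
  "lastw M b = (if (M - b) mod phase b = 0 then [ee b]
                else iv (M + 1 - (M - b) mod phase b) ((M - b) mod phase b) @ [ee b])"

definition blk :: "nat \<Rightarrow> nat \<Rightarrow> nat list list" where
  "blk M b = iv 1 b # map (pc b (phase b)) [0..<(M - b) div phase b] @ [lastw M b]"

lemma concat_pc: "concat (map (pc b m) [0..<q]) = iv (b + 1) (q * m)"
proof (induction q)
  case 0 thus ?case by (simp add: iv_def)
next
  case (Suc q)
  have "concat (map (pc b m) [0..<Suc q]) = concat (map (pc b m) [0..<q]) @ pc b m q" by simp
  also have "\<dots> = iv (b + 1) (q * m) @ iv (b + 1 + q * m) m" by (simp only: Suc.IH pc_def)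
  also have "\<dots> = iv (b + 1) (q * m + m)" by (rule iv_append)
  finally show ?case by (simp add: add.commute)
qed

lemma concat_blk:
  assumes "2 \<le> b" "b < M"
  shows "concat (blk M b) = iv 1 M @ [ee b]"
proof -
  define m where "m = phase b"
  define q where "q = (M - b) div m"
  define r where "r = (M - b) mod m"
  have m1: "1 \<le> m" using phase_props[OF assms(1)] m_def by simp
  have Mb: "M - b = q * m + r" unfolding q_def r_def by simp
  have A: "iv 1 b @ iv (b + 1) (q * m) = iv 1 (b + q * m)"
    using iv_append[of 1 b "q * m"] by (simp add: add.commute)
  have "concat (blk M b) = iv 1 b @ iv (b + 1) (q * m) @ lastw M b"
    unfolding blk_def using concat_pc m_def q_def by simp
  also have "\<dots> = iv 1 (b + q * m) @ lastw M b" using A by simp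
  also have "\<dots> = iv 1 M @ [ee b]"
  proof (cases "r = 0")
    case True
    hence "lastw M b = [ee b]" unfolding lastw_def r_def m_def by simp
    moreover have "b + q * m = M" using Mb True assms by simp
    ultimately show ?thesis by simp
  next
    case False
    hence "lastw M b = iv (M + 1 - r) r @ [ee b]" unfolding lastw_def r_def m_def by simp
    moreover have "M + 1 - r = 1 + (b + q * m)" using Mb assms by simp
    moreover have "b + q * m + r = M" using Mb assms by simp
    ultimately show ?thesis using iv_append[of 1 "b + q * m" r] by simp
  qed
  finally show ?thesis .
qed

lemma decomp3:
  assumes "p # map g [0..<q] @ [l] = xs @ f # ys"
  shows "(xs = [] \<and> f = p) \<or> (\<exists>j<q. f = g j \<and> xs = p # map g [0..<j]) \<or>
         (f = l \<and> xs = p # map g [0..<q])"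
proof -
  let ?L = "p # map g [0..<q] @ [l]"
  define k where "k = length xs"
  have kl: "k < Suc (Suc q)" using arg_cong[OF assms, of length] k_def by simp
  have f: "f = ?L ! k" using assms k_def by (simp add: nth_append)
  have xs: "xs = take k ?L" using assms k_def by simp
  show ?thesis
  proof (cases k)
    case 0 thus ?thesis using f xs by simp
  next
    case (Suc k')
    show ?thesis
    proof (cases "k' < q")
      case True
      have "f = g k'" using f Suc True by (simp add: nth_append)
      moreover have "xs = p # map g [0..<k']" using xs Suc True by (simp add: take_map take_upt)
      ultimately show ?thesis using True by blast
    next
      case False
      hence kq: "k' = q" using kl Suc by simp
      have "f = l" using f Suc kq by (simp add: nth_append)
      moreover have "xs = p # map g [0..<q]" using xs Suc kq by simp
      ultimately show ?thesis by blast
    qed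
  qed
qed


definition FU :: "nat \<Rightarrow> nat list list" where "FU L = map uw [1..<Suc L]"
definition FG :: "nat \<Rightarrow> nat list list" where
  "FG M = concat (map (\<lambda>i. [[uu (Suc i)], iv 1 i]) [1..<Suc M])"
definition FQ :: "nat \<Rightarrow> nat \<Rightarrow> nat list list" where
  "FQ M B = map (\<lambda>b. iv 1 M @ [ee b]) [1..<Suc B]"
definition FP :: "nat \<Rightarrow> nat \<Rightarrow> nat list list" where
  "FP k r = map (\<lambda>i. replicate i aa) [1..<Suc k] @ map (\<lambda>j. [pp j]) [1..<Suc r]"
definition FU' :: "nat \<Rightarrow> nat list list" where
  "FU' L = concat (map (\<lambda>i. [uw (i - 1), [uu i]]) [2..<Suc L])"
definition FG' :: "nat \<Rightarrow> nat list list" where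
  "FG' M = concat (map (\<lambda>i. [uu (Suc i), yy 1] # (if 2 \<le> i then [iv 2 (i - 1)] else [])) [1..<Suc M])"
definition FQ' :: "nat \<Rightarrow> nat \<Rightarrow> nat list list" where
  "FQ' M B = [iv 1 1, iv 2 (M - 1) @ [ee 1]] @ concat (map (blk M) [2..<Suc B])"

lemma concat_FU: "1 \<le> L \<Longrightarrow> concat (FU L) = uu 1 # concat (FU' L)"
proof (induction L rule: dec_induct)
  case base thus ?case by (simp add: FU_def FU'_def uw_def)
next
  case (step L)
  have a: "FU (Suc L) = FU L @ [uw (Suc L)]" by (simp add: FU_def)
  have b: "FU' (Suc L) = FU' L @ [uw L, [uu (Suc L)]]"
    using step.hyps by (simp add: FU'_def)
  show ?case using step.IH a b by (simp add: uw_Suc)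
qed

lemma concat_concat_cong:
  "(\<And>i. i \<in> set xs \<Longrightarrow> concat (F i) = concat (G i)) \<Longrightarrow>
   concat (concat (map F xs)) = concat (concat (map G xs))"
  by (induction xs) auto

lemma concat_FG: "concat (FG' M) = concat (FG M)"
  unfolding FG'_def FG_def
proof (rule concat_concat_cong)
  fix i assume "i \<in> set [1..<Suc M]"
  hence i: "1 \<le> i" by auto
  show "concat ([uu (Suc i), yy 1] # (if 2 \<le> i then [iv 2 (i - 1)] else [])) =
        concat [[uu (Suc i)], iv 1 i]"
  proof (cases "2 \<le> i")
    case True
    then obtain i' where "i = Suc i'" by (cases i) auto
    thus ?thesis using True by (simp add: iv_Suc eval_nat_numeral)
  next
    case False
    hence "i = 1" using i by simp
    thus ?thesis by (simp add: iv_def)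
  qed
qed

lemma concat_concat_map: "concat (concat (map F xs)) = concat (map (\<lambda>i. concat (F i)) xs)"
  by (induction xs) auto

lemma concat_FQ:
  assumes "2 \<le> M" "B < M" "1 \<le> B"
  shows "concat (FQ' M B) = concat (FQ M B)"
proof -
  have 1: "concat (concat (map (blk M) [2..<Suc B])) = concat (map (\<lambda>b. iv 1 M @ [ee b]) [2..<Suc B])"
  proof -
    have "map (\<lambda>i. concat (blk M i)) [2..<Suc B] = map (\<lambda>b. iv 1 M @ [ee b]) [2..<Suc B]"
    proof (rule map_cong[OF refl])
      fix b assume "b \<in> set [2..<Suc B]"
      hence "2 \<le> b" "b < M" using assms by auto
      thus "concat (blk M b) = iv 1 M @ [ee b]" by (rule concat_blk)
    qed
    thus ?thesis by (simp only: concat_concat_map)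
  qed
  have 2: "iv 1 1 @ iv 2 (M - 1) = iv 1 M"
    using iv_append[of 1 1 "M - 1"] assms by (simp add: eval_nat_numeral)
  have "[1..<Suc B] = 1 # [Suc 1..<Suc B]" by (rule upt_conv_Cons) (use assms in simp)
  hence 3: "[1..<Suc B] = 1 # [2..<Suc B]" by (simp only: Suc_1)
  have "concat (FQ' M B) = (iv 1 1 @ iv 2 (M - 1)) @ [ee 1] @ concat (concat (map (blk M) [2..<Suc B]))"
    unfolding FQ'_def by simp
  also have "\<dots> = (iv 1 M @ [ee 1]) @ concat (map (\<lambda>b. iv 1 M @ [ee b]) [2..<Suc B])"
    unfolding 1 2 by simp
  also have "\<dots> = concat (FQ M B)" unfolding FQ_def 3 by simp
  finally show ?thesis .
qed

section \<open>Goodness, unperturbed\<close>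

lemma single_decomp: "[x] = xs @ f # ys \<Longrightarrow> xs = [] \<and> f = x"
  by (cases xs) auto

lemma map_as_concat: "map F xs = concat (map (\<lambda>b. [F b]) xs)"
  by (induct xs) auto

lemma good_seq_map_upt:
  assumes "\<And>b. a \<le> b \<Longrightarrow> b < c \<Longrightarrow> good (D @ map F [a..<b]) (F b)"
  shows "good_seq D (map F [a..<c])"
proof -
  have "good_seq D (concat (map (\<lambda>b. [F b]) [a..<c]))"
  proof (rule good_seq_concat_upt)
    fix b xs f ys assume ab: "a \<le> b" "b < c" and d: "[F b] = xs @ f # ys"
    from single_decomp[OF d] have h: "xs = [] \<and> f = F b" .
    have "good (D @ map F [a..<b]) (F b)" using assms[OF ab] .
    thus "good (D @ concat (map (\<lambda>b. [F b]) [a..<b]) @ xs) f"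
      using h by (simp only: map_as_concat[symmetric] append_Nil2)
  qed
  thus ?thesis by (simp only: map_as_concat[symmetric])
qed

lemma decomp2: "[p1, p2] = xs @ f # ys \<Longrightarrow> (xs = [] \<and> f = p1) \<or> (xs = [p1] \<and> f = p2)"
  by (cases xs) (auto simp: Cons_eq_append_conv)

lemma set_concat_map_upt:
  "w \<in> set (concat (map F [a..<b])) \<longleftrightarrow> (\<exists>i. a \<le> i \<and> i < b \<and> w \<in> set (F i))"
  by auto

lemma gU: "good_seq [] (FU L)"
  unfolding FU_def
proof (rule good_seq_map_upt)
  fix b assume b: "1 \<le> b" "b < Suc L"
  show "good ([] @ map uw [1..<b]) (uw b)"
    unfolding good_def
  proof (intro conjI ballI)
    show "uw b \<noteq> []" using b by simp
    show "butlast (uw b) \<in> set ([] # [] @ map uw [1..<b])"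
      using b by (cases "b = 1") (auto simp: uw_butlast)
  next
    fix w assume "w \<in> set ([] @ map uw [1..<b])"
    then obtain j where "j < b" "w = uw j" by auto
    thus "\<not> pre (uw b) w" using pre_len by fastforce
  qed
qed

lemma gG: "good_seq (FU L) (FG M)"
  unfolding FG_def
proof (rule good_seq_concat_upt)
  fix i xs f ys
  assume i: "1 \<le> i" "i < Suc M" and d: "[[uu (Suc i)], iv 1 i] = xs @ f # ys"
  let ?D = "FU L @ concat (map (\<lambda>i. [[uu (Suc i)], iv 1 i]) [1..<i]) @ xs"
  have memD: "w \<in> set ?D \<Longrightarrow> (\<exists>j. w = uw j \<and> 1 \<le> j) \<or> (\<exists>i'. w = [uu (Suc i')] \<and> i' < i) \<or>
        (\<exists>i'. w = iv 1 i' \<and> 1 \<le> i' \<and> i' < i) \<or> w \<in> set xs" for w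
    by (auto simp: FU_def)
  from decomp2[OF d] show "good ?D f"
  proof
    assume h: "xs = [] \<and> f = [uu (Suc i)]"
    show ?thesis unfolding good_def
    proof (intro conjI ballI)
      show "f \<noteq> []" using h by simp
      show "butlast f \<in> set ([] # ?D)" using h by simp
    next
      fix w assume "w \<in> set ?D"
      show "\<not> pre f w"
      proof
        assume p: "pre f w"
        hence hw: "hd w = uu (Suc i)" using pre_hd h by fastforce
        from memD[OF \<open>w \<in> set ?D\<close>] show False
          using hw h i by (auto simp: iv_hd)
      qed
    qed
  next
    assume h: "xs = [[uu (Suc i)]] \<and> f = iv 1 i"
    show ?thesis unfolding good_def
    proof (intro conjI ballI)
      show "f \<noteq> []" using h i by simp
      show "butlast f \<in> set ([] # ?D)"
        using h i by (cases "i = 1") (auto simp: iv_butlast)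
    next
      fix w assume "w \<in> set ?D"
      show "\<not> pre f w"
      proof
        assume p: "pre f w"
        hence hw: "hd w = yy 1" using pre_hd h i by fastforce
        have lw: "i \<le> length w" using pre_len[OF p] h by simp
        from memD[OF \<open>w \<in> set ?D\<close>] show False
          using hw lw h i by (auto simp: iv_hd)
      qed
    qed
  qed
qed

lemma gQ:
  assumes "1 \<le> M"
  shows "good_seq (FU L @ FG M) (FQ M B)"
  unfolding FQ_def
proof (rule good_seq_map_upt)
  fix b assume b: "1 \<le> b" "b < Suc B"
  let ?D = "(FU L @ FG M) @ map (\<lambda>b. iv 1 M @ [ee b]) [1..<b]"
  show "good ?D (iv 1 M @ [ee b])"
    unfolding good_def
  proof (intro conjI ballI)
    show "iv 1 M @ [ee b] \<noteq> []" by simp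
    have "iv 1 M \<in> set (FG M)" unfolding FG_def set_concat_map_upt
      by (intro exI[of _ M]) (use assms in simp)
    thus "butlast (iv 1 M @ [ee b]) \<in> set ([] # ?D)" by simp
  next
    fix w assume w: "w \<in> set ?D"
    show "\<not> pre (iv 1 M @ [ee b]) w"
    proof
      assume "pre (iv 1 M @ [ee b]) w"
      hence e: "ee b \<in> set w" using pre_set by fastforce
      have "(\<exists>j. w = uw j) \<or> (\<exists>i. w = [uu (Suc i)]) \<or> (\<exists>i. w = iv 1 i) \<or>
            (\<exists>b'. b' < b \<and> w = iv 1 M @ [ee b'])"
        using w by (auto simp: FU_def FG_def)
      thus False using e by (auto simp: uw_set iv_set)
    qed
  qed
qed

lemma gP:
  assumes "\<forall>w\<in>set D. aa \<notin> set w \<and> (\<forall>j. pp j \<notin> set w)"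
  shows "good_seq D (FP k r)"
  unfolding FP_def good_seq_append
proof
  show "good_seq D (map (\<lambda>i. replicate i aa) [1..<Suc k])"
  proof (rule good_seq_map_upt)
    fix i assume i: "1 \<le> i" "i < Suc k"
    let ?D = "D @ map (\<lambda>i. replicate i aa) [1..<i]"
    show "good ?D (replicate i aa)" unfolding good_def
    proof (intro conjI ballI)
      show "replicate i aa \<noteq> []" using i by simp
      show "butlast (replicate i aa) \<in> set ([] # ?D)"
        using i by (cases "i = 1") (auto simp: butlast_rep)
    next
      fix w assume w: "w \<in> set ?D"
      show "\<not> pre (replicate i aa) w"
      proof
        assume p: "pre (replicate i aa) w"
        hence "aa \<in> set w" using pre_set i by fastforce
        hence "w \<notin> set D" using assms by auto
        then obtain i' where "i' < i" "w = replicate i' aa" using w by auto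
        thus False using pre_len[OF p] by simp
      qed
    qed
  qed
next
  show "good_seq (D @ map (\<lambda>i. replicate i aa) [1..<Suc k]) (map (\<lambda>j. [pp j]) [1..<Suc r])"
  proof (rule good_seq_map_upt)
    fix j assume j: "1 \<le> j" "j < Suc r"
    let ?D = "(D @ map (\<lambda>i. replicate i aa) [1..<Suc k]) @ map (\<lambda>j. [pp j]) [1..<j]"
    show "good ?D [pp j]" unfolding good_def
    proof (intro conjI ballI)
      show "[pp j] \<noteq> []" by simp
      show "butlast [pp j] \<in> set ([] # ?D)" by simp
    next
      fix w assume w: "w \<in> set ?D"
      show "\<not> pre [pp j] w"
      proof
        assume p: "pre [pp j] w"
        hence "pp j \<in> set w" using pre_set by fastforce
        with w assms show False by (auto split: if_splits)
      qed
    qed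
  qed
qed


section \<open>Goodness, perturbed\<close>

lemma gU':
  assumes D0: "\<forall>w\<in>set D0. w = [uu 0]"
  shows "good_seq D0 (FU' L)"
  unfolding FU'_def
proof (rule good_seq_concat_upt)
  fix i xs f ys
  assume i: "2 \<le> i" "i < Suc L" and d: "[uw (i - 1), [uu i]] = xs @ f # ys"
  let ?D = "D0 @ concat (map (\<lambda>i. [uw (i - 1), [uu i]]) [2..<i]) @ xs"
  have memD: "w \<in> set ?D \<Longrightarrow> w = [uu 0] \<or> (\<exists>i'. 2 \<le> i' \<and> i' < i \<and> (w = uw (i' - 1) \<or> w = [uu i']))
     \<or> w \<in> set xs" for w
    using D0 by auto
  from decomp2[OF d] show "good ?D f"
  proof
    assume h: "xs = [] \<and> f = uw (i - 1)"
    show ?thesis unfolding good_def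
    proof (intro conjI ballI)
      show "f \<noteq> []" using h i by simp
      show "butlast f \<in> set ([] # ?D)"
      proof (cases "i = 2")
        case True thus ?thesis using h by (simp add: uw_butlast)
      next
        case False
        have "uw (i - 1 - 1) \<in> set (concat (map (\<lambda>i. [uw (i - 1), [uu i]]) [2..<i]))"
          unfolding set_concat_map_upt by (intro exI[of _ "i - 1"]) (use False i in auto)
        thus ?thesis using h by (simp add: uw_butlast)
      qed
    next
      fix w assume w: "w \<in> set ?D"
      show "\<not> pre f w"
      proof
        assume p: "pre f w"
        hence hw: "hd w = uu 1" using pre_hd h i by fastforce
        have lw: "i - 1 \<le> length w" using pre_len[OF p] h by simp
        from memD[OF w] show False using hw lw h i by auto
      qed
    qed
  next
    assume h: "xs = [uw (i - 1)] \<and> f = [uu i]"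
    show ?thesis unfolding good_def
    proof (intro conjI ballI)
      show "f \<noteq> []" using h by simp
      show "butlast f \<in> set ([] # ?D)" using h by simp
    next
      fix w assume w: "w \<in> set ?D"
      show "\<not> pre f w"
      proof
        assume p: "pre f w"
        hence hw: "hd w = uu i" using pre_hd h by fastforce
        from memD[OF w] show False using hw h i by auto
      qed
    qed
  qed
qed

lemma memFU': "w \<in> set (FU' L) \<Longrightarrow> \<exists>i'. 2 \<le> i' \<and> i' \<le> L \<and> (w = uw (i' - 1) \<or> w = [uu i'])"
  unfolding FU'_def by auto

lemma decompG:
  assumes "[uu (Suc i), yy 1] # (if 2 \<le> i then [iv 2 (i - 1)] else []) = xs @ f # ys"
  shows "(xs = [] \<and> f = [uu (Suc i), yy 1]) \<or> (2 \<le> i \<and> xs = [[uu (Suc i), yy 1]] \<and> f = iv 2 (i - 1))"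
proof (cases "2 \<le> i")
  case True
  thus ?thesis using decomp2[of "[uu (Suc i), yy 1]" "iv 2 (i - 1)" xs f ys] assms by simp
next
  case False
  thus ?thesis using single_decomp[of "[uu (Suc i), yy 1]" xs f ys] assms by simp
qed

lemma gG':
  assumes D0: "\<forall>w\<in>set D0. w = [uu 0]" and hML: "M < L"
  shows "good_seq (D0 @ FU' L) (FG' M)"
  unfolding FG'_def
proof (rule good_seq_concat_upt)
  fix i xs f ys
  assume i: "1 \<le> i" "i < Suc M"
    and d: "[uu (Suc i), yy 1] # (if 2 \<le> i then [iv 2 (i - 1)] else []) = xs @ f # ys"
  let ?G = "\<lambda>i. [uu (Suc i), yy 1] # (if 2 \<le> i then [iv 2 (i - 1)] else [])"
  let ?D = "(D0 @ FU' L) @ concat (map ?G [1..<i]) @ xs"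
  have memD: "w \<in> set ?D \<Longrightarrow> w = [uu 0] \<or> (\<exists>i'. 2 \<le> i' \<and> i' \<le> L \<and> (w = uw (i' - 1) \<or> w = [uu i']))
     \<or> (\<exists>i'. 1 \<le> i' \<and> i' < i \<and> (w = [uu (Suc i'), yy 1] \<or> (2 \<le> i' \<and> w = iv 2 (i' - 1))))
     \<or> w \<in> set xs" for w
  proof -
    assume "w \<in> set ?D"
    hence "w \<in> set D0 \<or> w \<in> set (FU' L) \<or> w \<in> set (concat (map ?G [1..<i])) \<or> w \<in> set xs"
      by simp
    thus ?thesis
    proof (elim disjE)
      assume "w \<in> set (concat (map ?G [1..<i]))"
      then obtain i' where "1 \<le> i'" "i' < i" "w \<in> set (?G i')"
        unfolding set_concat_map_upt by blast
      hence "w = [uu (Suc i'), yy 1] \<or> (2 \<le> i' \<and> w = iv 2 (i' - 1))" by (auto split: if_splits)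
      thus ?thesis using \<open>1 \<le> i'\<close> \<open>i' < i\<close> by blast
    qed (use D0 memFU'[of w L] in auto)
  qed
  from decompG[OF d] show "good ?D f"
  proof
    assume h: "xs = [] \<and> f = [uu (Suc i), yy 1]"
    show ?thesis unfolding good_def
    proof (intro conjI ballI)
      show "f \<noteq> []" using h by simp
      have "[uu (Suc i)] \<in> set (FU' L)" unfolding FU'_def set_concat_map_upt
        by (intro exI[of _ "Suc i"]) (use i hML in simp)
      thus "butlast f \<in> set ([] # ?D)" using h by simp
    next
      fix w assume w: "w \<in> set ?D"
      show "\<not> pre f w"
      proof
        assume p: "pre f w"
        hence hw: "hd w = uu (Suc i)" using pre_hd h by fastforce
        have lw: "2 \<le> length w" using pre_len[OF p] h by simp
        from memD[OF w] show False using hw lw h i by auto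
      qed
    qed
  next
    assume h: "2 \<le> i \<and> xs = [[uu (Suc i), yy 1]] \<and> f = iv 2 (i - 1)"
    show ?thesis unfolding good_def
    proof (intro conjI ballI)
      show "f \<noteq> []" using h by simp
      show "butlast f \<in> set ([] # ?D)"
      proof (cases "i = 2")
        case True thus ?thesis using h by (simp add: iv_butlast)
      next
        case False
        have "iv 2 (i - 1 - 1) \<in> set (concat (map ?G [1..<i]))"
          unfolding set_concat_map_upt
          by (intro exI[of _ "i - 1"]) (use False h in auto)
        thus ?thesis using h by (simp add: iv_butlast)
      qed
    next
      fix w assume w: "w \<in> set ?D"
      show "\<not> pre f w"
      proof
        assume p: "pre f w"
        hence hw: "hd w = yy 2" using pre_hd h by fastforce
        have lw: "i - 1 \<le> length w" using pre_len[OF p] h by simp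
        from memD[OF w] show False using hw lw h i by auto
      qed
    qed
  qed
qed


lemma blk_mem: "w \<in> set (blk M b) \<longleftrightarrow> w = iv 1 b \<or>
   (\<exists>j < (M - b) div phase b. w = pc b (phase b) j) \<or> w = lastw M b"
  unfolding blk_def by auto

lemma blk_len: "length (blk M b) = (M - b) div phase b + 2"
  unfolding blk_def by simp

lemma same_phase_contra:
  assumes "base m \<le> b'" "b' < b" "b < base m + m" "b + j * m = b' + j' * m"
  shows False
proof (cases "j' \<le> j")
  case True
  hence "j' * m \<le> j * m" by (rule mult_le_mono1)
  thus False using assms by linarith
next
  case False
  hence "Suc j \<le> j'" by simp
  hence "Suc j * m \<le> j' * m" by (rule mult_le_mono1)
  thus False using assms by simp
qed

lemma lastw_cases:
  assumes "2 \<le> b" "b < M"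
  shows "((M - b) mod phase b = 0 \<and> lastw M b = [ee b]) \<or>
         (0 < (M - b) mod phase b \<and> (M - b) mod phase b < phase b \<and>
          b + 1 \<le> M + 1 - (M - b) mod phase b \<and>
          lastw M b = iv (M + 1 - (M - b) mod phase b) ((M - b) mod phase b) @ [ee b])"
proof -
  have m: "1 \<le> phase b" using phase_props[OF assms(1)] by simp
  have le: "(M - b) mod phase b \<le> M - b" by (rule mod_less_eq_dividend)
  have lt: "(M - b) mod phase b < phase b" using m by simp
  have "b + 1 \<le> M + 1 - (M - b) mod phase b" using le assms by arith
  thus ?thesis using lt unfolding lastw_def by auto
qed

lemma blk_letters:
  assumes "w \<in> set (blk M b')"
  shows "set w \<subseteq> range yy \<union> {ee b'}"
  using assms unfolding blk_mem lastw_def pc_def by (auto simp: iv_set split: if_splits)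

lemma blk_heads:
  assumes "2 \<le> b'" "b' < M" "w \<in> set (blk M b')" "w \<noteq> iv 1 b'"
  shows "(\<exists>s. hd w = yy s \<and> b' + 1 \<le> s) \<or> w = [ee b']"
proof -
  have m: "1 \<le> phase b'" using phase_props[OF assms(1)] by simp
  from assms(3,4) have "(\<exists>j < (M - b') div phase b'. w = pc b' (phase b') j) \<or> w = lastw M b'"
    unfolding blk_mem by simp
  thus ?thesis
  proof
    assume "\<exists>j < (M - b') div phase b'. w = pc b' (phase b') j"
    then obtain j where "w = pc b' (phase b') j" by blast
    thus ?thesis using m by (auto simp: pc_def)
  next
    assume "w = lastw M b'"
    thus ?thesis using lastw_cases[OF assms(1,2)] by auto
  qed
qed

lemma memFG': "w \<in> set (FG' M) \<Longrightarrow> (\<exists>i. w = [uu (Suc i), yy 1]) \<or> (\<exists>i. 2 \<le> i \<and> w = iv 2 (i - 1))"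
  unfolding FG'_def by (auto split: if_splits)

lemma base_ge2: "2 \<le> base m"
  using base_mono[of 0 m] by simp

lemma gQ':
  assumes D0: "\<forall>w\<in>set D0. w = [uu 0]" and M2: "2 \<le> M" and BM: "B < M"
  shows "good_seq (D0 @ FU' L @ FG' M) (FQ' M B)"
proof -
  let ?D = "D0 @ FU' L @ FG' M"
  let ?w1 = "iv 1 1"
  let ?w2 = "iv 2 (M - 1) @ [ee 1]"
  have wD: "set w \<subseteq> range uu \<union> range yy \<and> w \<noteq> [] \<and> (hd w \<in> range uu \<or> hd w = yy 2)"
    if "w \<in> set ?D" for w
  proof -
    from that have "w = [uu 0] \<or> (\<exists>i'. 2 \<le> i' \<and> i' \<le> L \<and> (w = uw (i' - 1) \<or> w = [uu i'])) \<or>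
      (\<exists>i. w = [uu (Suc i), yy 1]) \<or> (\<exists>i. 2 \<le> i \<and> w = iv 2 (i - 1))"
      using D0 memFU'[of w L] memFG'[of w M] by auto
    thus ?thesis by (auto simp: uw_set iv_set)
  qed
  have g1: "good ?D ?w1" unfolding good_def
  proof (intro conjI ballI)
    show "?w1 \<noteq> []" by simp
    show "butlast ?w1 \<in> set ([] # ?D)" by (simp add: iv_butlast)
  next
    fix w assume w: "w \<in> set ?D"
    show "\<not> pre ?w1 w"
    proof
      assume "pre ?w1 w"
      hence "hd w = yy 1" using pre_hd by fastforce
      thus False using wD[OF w] by auto
    qed
  qed
  have g2: "good (?D @ [?w1]) ?w2" unfolding good_def
  proof (intro conjI ballI)
    show "?w2 \<noteq> []" by simp
    have "iv 2 (M - 1) \<in> set (FG' M)" unfolding FG'_def set_concat_map_upt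
      by (intro exI[of _ M]) (use M2 in auto)
    thus "butlast ?w2 \<in> set ([] # ?D @ [?w1])" by simp
  next
    fix w assume w: "w \<in> set (?D @ [?w1])"
    show "\<not> pre ?w2 w"
    proof
      assume "pre ?w2 w"
      hence e: "ee 1 \<in> set w" using pre_set by fastforce
      from w have "w \<in> set ?D \<or> w = ?w1" by auto
      thus False
      proof
        assume "w \<in> set ?D" hence "ee 1 \<in> range uu \<union> range yy" using e wD by blast
        thus False by simp
      next
        assume "w = ?w1" thus False using e by (auto simp: iv_set)
      qed
    qed
  qed
  have g3: "good_seq (?D @ [?w1, ?w2]) (concat (map (blk M) [2..<Suc B]))"
  proof (rule good_seq_concat_upt)
    fix b xs f ys
    assume b: "2 \<le> b" "b < Suc B" and d: "blk M b = xs @ f # ys"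
    have bM: "b < M" using b BM by simp
    define m where "m = phase b"
    define q where "q = (M - b) div m"
    have mp: "1 \<le> m" "base m \<le> b" "b < base m + m" using phase_props[OF b(1)] m_def by auto
    let ?DD = "(?D @ [?w1, ?w2]) @ concat (map (blk M) [2..<b]) @ xs"
    have memDD: "w \<in> set ?D \<or> w = ?w1 \<or> w = ?w2 \<or> (\<exists>b'. 2 \<le> b' \<and> b' < b \<and> w \<in> set (blk M b'))
       \<or> w \<in> set xs" if "w \<in> set ?DD" for w
      using that unfolding set_append set_concat_map_upt by auto
    have d': "iv 1 b # map (pc b m) [0..<q] @ [lastw M b] = xs @ f # ys"
      using d unfolding blk_def m_def q_def .
    have w2hd: "hd ?w2 = yy 2" using M2 by simp
    from decomp3[OF d'] show "good ?DD f"
    proof (elim disjE exE conjE)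
      assume xs: "xs = []" and f: "f = iv 1 b"
      show ?thesis unfolding good_def
      proof (intro conjI ballI)
        show "f \<noteq> []" using f b by simp
        show "butlast f \<in> set ([] # ?DD)"
        proof (cases "b = 2")
          case True thus ?thesis using f by (simp add: iv_butlast)
        next
          case False
          have "iv 1 (b - 1) \<in> set (concat (map (blk M) [2..<b]))"
            unfolding set_concat_map_upt blk_mem
            by (intro exI[of _ "b - 1"]) (use False b in auto)
          thus ?thesis using f by (simp add: iv_butlast)
        qed
      next
        fix w assume w: "w \<in> set ?DD"
        show "\<not> pre f w"
        proof
          assume p: "pre f w"
          have hw: "hd w = yy 1" using pre_hd[OF p] f b by simp
          have lw: "b \<le> length w" using pre_len[OF p] f by simp
          from memDD[OF w] show False
          proof (elim disjE exE conjE)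
            assume a: "w \<in> set ?D"
            have "hd w \<in> range uu \<or> hd w = yy 2" using wD[OF a] by blast
            thus False using hw by auto
          next
            assume "w = ?w1" thus False using lw b by simp
          next
            assume "w = ?w2" thus False using hw w2hd by simp
          next
            fix b' assume b': "2 \<le> b'" "b' < b" "w \<in> set (blk M b')"
            show False
            proof (cases "w = iv 1 b'")
              case True thus False using lw b' by simp
            next
              case False
              from blk_heads[OF b'(1) _ b'(3) False] b' bM hw show False by auto
            qed
          next
            assume "w \<in> set xs" thus False using xs by simp
          qed
        qed
      qed
    next
      fix j assume jq: "j < q" and f: "f = pc b m j" and xs: "xs = iv 1 b # map (pc b m) [0..<j]"
      define s where "s = b + 1 + j * m"
      have fs: "f = iv s m" using f unfolding pc_def s_def by simp
      have full: "s + m \<le> M + 1"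
      proof -
        have "Suc j \<le> q" using jq by simp
        hence "Suc j * m \<le> q * m" by (rule mult_le_mono1)
        also have "\<dots> \<le> M - b" unfolding q_def by (rule div_times_less_eq_dividend)
        finally show ?thesis unfolding s_def using bM by simp
      qed
      have s3: "b + 1 \<le> s" unfolding s_def by simp
      show ?thesis unfolding good_def
      proof (intro conjI ballI)
        show "f \<noteq> []" using fs mp by simp
        show "butlast f \<in> set ([] # ?DD)"
        proof (cases "m = 1")
          case True thus ?thesis using fs by (simp add: iv_butlast)
        next
          case False
          hence m2: "1 \<le> m - 1" using mp by simp
          have bs: "base (Suc (m - 1)) \<le> s" using mp False s3 by simp
          have sM: "s + (m - 1) \<le> M + 1" using full by simp
          obtain b' j' where w: "base (m - 1) \<le> b'" "b' < base (m - 1) + (m - 1)"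
              "s = b' + 1 + j' * (m - 1)" "j' < (M - b') div (m - 1)"
            using witness[OF m2 bs sM] by blast
          have pb: "phase b' = m - 1" by (rule phase_eq[OF m2 w(1) w(2)])
          have "base (m - 1) + (m - 1) = base m" using mp(1) by (cases m) auto
          hence bb: "b' < b" using w(2) mp by simp
          have b2: "2 \<le> b'" using w(1) base_ge2[of "m - 1"] by simp
          have "iv s (m - 1) \<in> set (blk M b')"
            unfolding blk_mem pb pc_def using w(3,4) by auto
          hence "iv s (m - 1) \<in> set (concat (map (blk M) [2..<b]))"
            unfolding set_concat_map_upt using b2 bb by blast
          thus ?thesis using fs by (simp add: iv_butlast)
        qed
      next
        fix w assume w: "w \<in> set ?DD"
        show "\<not> pre f w"
        proof
          assume p: "pre f w"
          have hw: "hd w = yy s" using pre_hd[OF p] fs mp by simp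
          have lw: "m \<le> length w" using pre_len[OF p] fs by simp
          have fy: "set f \<subseteq> range yy" using fs by (auto simp: iv_set)
          from memDD[OF w] show False
          proof (elim disjE exE conjE)
            assume a: "w \<in> set ?D"
            have "hd w \<in> range uu \<or> hd w = yy 2" using wD[OF a] by blast
            thus False using hw s3 b by auto
          next
            assume "w = ?w1" thus False using hw s3 b by simp
          next
            assume "w = ?w2" thus False using hw w2hd s3 b by simp
          next
            fix b' assume b': "2 \<le> b'" "b' < b" "w \<in> set (blk M b')"
            have b'M: "b' < M" using b' bM by simp
            define m' where "m' = phase b'"
            have mp': "1 \<le> m'" "base m' \<le> b'" "b' < base m' + m'"
              using phase_props[OF b'(1)] m'_def by auto
            have mm: "m' \<le> m" unfolding m'_def m_def using b' by (simp add: phase_mono)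
            from b'(3) have "w = iv 1 b' \<or> (\<exists>j' < (M - b') div m'. w = pc b' m' j') \<or> w = lastw M b'"
              unfolding blk_mem m'_def by simp
            thus False
            proof (elim disjE exE conjE)
              assume "w = iv 1 b'" thus False using hw s3 b b' by simp
            next
              fix j' assume "w = pc b' m' j'"
              hence ww: "w = iv (b' + 1 + j' * m') m'" unfolding pc_def .
              have "s = b' + 1 + j' * m'" using hw ww mp' by simp
              moreover have "m \<le> m'" using lw ww by simp
              hence "m' = m" using mm by simp
              ultimately show False
                using same_phase_contra[of m b' b j j'] mp' mp b' unfolding s_def by simp
            next
              assume wl: "w = lastw M b'"
              from lastw_cases[OF b'(1) b'M] show False
              proof (elim disjE conjE)
                assume "lastw M b' = [ee b']" thus False using wl hw by simp
              next
                assume r: "0 < (M - b') mod phase b'" "(M - b') mod phase b' < phase b'"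
                  "lastw M b' = iv (M + 1 - (M - b') mod phase b') ((M - b') mod phase b') @ [ee b']"
                let ?r = "(M - b') mod phase b'"
                have "pre f (iv (M + 1 - ?r) ?r)"
                  by (rule pre_snoc) (use p wl r(3) fy in auto)
                hence "m \<le> ?r" using pre_len fs by fastforce
                thus False using r(2) mm unfolding m'_def by simp
              qed
            qed
          next
            assume "w \<in> set xs"
            hence "w = iv 1 b \<or> (\<exists>j'' < j. w = pc b m j'')" using xs by auto
            thus False
            proof (elim disjE exE conjE)
              assume "w = iv 1 b" thus False using hw s3 b by simp
            next
              fix j'' assume "j'' < j" "w = pc b m j''"
              hence "b + 1 + j'' * m = s" using hw mp by (simp add: pc_def)
              hence "j'' * m = j * m" unfolding s_def by simp
              thus False using \<open>j'' < j\<close> mp by simp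
            qed
          qed
        qed
      qed
    next
      assume f: "f = lastw M b" and xs: "xs = iv 1 b # map (pc b m) [0..<q]"
      have fe: "ee b \<in> set f" using f unfolding lastw_def by auto
      have nopre: "\<not> pre f w" if w: "w \<in> set ?DD" for w
      proof
        assume "pre f w"
        hence e: "ee b \<in> set w" using fe pre_set by blast
        from memDD[OF w] show False
        proof (elim disjE exE conjE)
          assume "w \<in> set ?D" hence "ee b \<in> range uu \<union> range yy" using e wD by blast
          thus False by simp
        next
          assume "w = ?w1" thus False using e by (auto simp: iv_set)
        next
          assume "w = ?w2" thus False using e b by (auto simp: iv_set)
        next
          fix b' assume b': "2 \<le> b'" "b' < b" "w \<in> set (blk M b')"
          thus False using blk_letters[OF b'(3)] e by auto
        next
          assume "w \<in> set xs" thus False using xs e by (auto simp: iv_set pc_def)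
        qed
      qed
      from lastw_cases[OF b(1) bM] show ?thesis
      proof (elim disjE conjE)
        assume "lastw M b = [ee b]"
        thus ?thesis unfolding good_def using f nopre by simp
      next
        assume r: "0 < (M - b) mod phase b" "(M - b) mod phase b < phase b"
          "b + 1 \<le> M + 1 - (M - b) mod phase b"
          "lastw M b = iv (M + 1 - (M - b) mod phase b) ((M - b) mod phase b) @ [ee b]"
        define rr where "rr = (M - b) mod phase b"
        define s where "s = M + 1 - rr"
        have fs: "f = iv s rr @ [ee b]" using f r(4) unfolding s_def rr_def by simp
        have r1: "1 \<le> rr" using r(1) rr_def by simp
        have rm: "Suc rr \<le> m" using r(2) rr_def m_def by simp
        have bs: "base (Suc rr) \<le> s"
          using base_mono[OF rm] mp(2) r(3) unfolding s_def rr_def by simp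
        have sM: "s + rr \<le> M + 1" unfolding s_def rr_def using r(3) by simp
        obtain b' j' where w: "base rr \<le> b'" "b' < base rr + rr"
            "s = b' + 1 + j' * rr" "j' < (M - b') div rr"
          using witness[OF r1 bs sM] by blast
        have pb: "phase b' = rr" by (rule phase_eq[OF r1 w(1) w(2)])
        have bb: "b' < b" using w(2) base_mono[OF rm] mp(2) by simp
        have b2: "2 \<le> b'" using w(1) base_ge2[of rr] by simp
        have "iv s rr \<in> set (blk M b')"
          unfolding blk_mem pb pc_def using w(3,4) by auto
        hence "iv s rr \<in> set (concat (map (blk M) [2..<b]))"
          unfolding set_concat_map_upt using b2 bb by blast
        hence "butlast f \<in> set ([] # ?DD)" using fs by simp
        thus ?thesis unfolding good_def using fs nopre by simp
      qed
    qed
  qed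
  show ?thesis unfolding FQ'_def good_seq_append using g1 g2 g3 by simp
qed


lemma lenFU: "2 * length (concat (FU L)) = L * (L + 1)"
proof (induction L)
  case 0 thus ?case by (simp add: FU_def)
next
  case (Suc L)
  have "FU (Suc L) = FU L @ [uw (Suc L)]" by (simp add: FU_def)
  thus ?case using Suc by simp
qed

lemma lenFG: "2 * length (concat (FG M)) = M * (M + 1) + 2 * M"
proof (induction M)
  case 0 thus ?case by (simp add: FG_def)
next
  case (Suc M)
  have "FG (Suc M) = FG M @ [[uu (Suc (Suc M))], iv 1 (Suc M)]" by (simp add: FG_def)
  thus ?case using Suc by simp
qed

lemma lenFQ: "length (concat (FQ M B)) = B * (M + 1)"
  by (induction B) (simp_all add: FQ_def)

lemma lenFP: "2 * length (concat (FP k r)) = k * (k + 1) + 2 * r"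
proof -
  have a: "2 * length (concat (map (\<lambda>i. replicate i aa) [1..<Suc k])) = k * (k + 1)"
    by (induction k) simp_all
  have b: "length (concat (map (\<lambda>j. [pp j]) [1..<Suc r])) = r"
    by (induction r) simp_all
  show ?thesis unfolding FP_def using a b by simp
qed

lemma len_concat_const: "(\<And>i. length (F i) = c) \<Longrightarrow> length (concat (map F xs)) = c * length xs"
  by (induction xs) auto

lemma len_concat_ge: "(\<And>i. i \<in> set xs \<Longrightarrow> c \<le> length (F i)) \<Longrightarrow> c * length xs \<le> length (concat (map F xs))"
  by (induction xs) (auto intro: add_mono)

definition MM :: "nat \<Rightarrow> nat" where "MM S = 4 * S * S"
definition LL :: "nat \<Rightarrow> nat" where "LL S = 4 * S * S + 1"
definition BB :: "nat \<Rightarrow> nat" where "BB S = 2 * S * S + S + 1"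
definition n0 :: "nat \<Rightarrow> nat" where "n0 S = 24 * (S * S * S * S) + 4 * (S * S * S) + 18 * (S * S) + S + 2"

lemma n0_eq: "2 * length (concat (FU (LL S) @ FG (MM S) @ FQ (MM S) (BB S))) = 2 * n0 S"
proof -
  have "2 * length (concat (FU (LL S) @ FG (MM S) @ FQ (MM S) (BB S))) =
    LL S * (LL S + 1) + (MM S * (MM S + 1) + 2 * MM S) + 2 * (BB S * (MM S + 1))"
    using lenFU[of "LL S"] lenFG[of "MM S"] lenFQ[of "MM S" "BB S"] by simp
  also have "\<dots> = 2 * n0 S" unfolding LL_def MM_def BB_def n0_def
    by (simp add: eval_nat_numeral algebra_simps)
  finally show ?thesis .
qed


section \<open>Assembling the two strings\<close>

definition FT :: "nat \<Rightarrow> nat \<Rightarrow> nat \<Rightarrow> nat list list" where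
  "FT S k r = FU (LL S) @ FG (MM S) @ FQ (MM S) (BB S) @ FP k r"
definition FT' :: "nat \<Rightarrow> nat \<Rightarrow> nat \<Rightarrow> nat list list" where
  "FT' S k r = FU' (LL S) @ FG' (MM S) @ FQ' (MM S) (BB S) @ FP k r"

lemma params:
  assumes "2 \<le> S"
  shows "2 \<le> MM S" "BB S < MM S" "1 \<le> BB S" "MM S < LL S" "1 \<le> LL S" "1 \<le> MM S"
proof -
  have "S * 2 \<le> S * S" using assms by simp
  hence "4 * S \<le> 2 * S * S" by simp
  hence "2 * S + 2 \<le> 2 * S * S" using assms by linarith
  thus "BB S < MM S" unfolding BB_def MM_def by simp
  have "2 * 2 \<le> S * S" using assms mult_le_mono[OF assms assms] by simp
  thus "2 \<le> MM S" "1 \<le> MM S" unfolding MM_def using assms by simp_all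
qed (simp_all add: BB_def MM_def LL_def)

lemma noletters_T:
  assumes "w \<in> set (FU L @ FG M @ FQ M B)"
  shows "aa \<notin> set w \<and> (\<forall>j. pp j \<notin> set w)"
proof -
  have "set w \<subseteq> range uu \<union> range yy \<union> range ee"
    using assms by (auto simp: FU_def FG_def FQ_def uw_set iv_set)
  thus ?thesis by auto
qed

lemma noletters_T':
  assumes D0: "\<forall>w\<in>set D0. w = [uu 0]" and w: "w \<in> set (D0 @ FU' L @ FG' M @ FQ' M B)"
  shows "aa \<notin> set w \<and> (\<forall>j. pp j \<notin> set w)"
proof -
  have "set w \<subseteq> range uu \<union> range yy \<union> range ee"
  proof -
    from w have "w \<in> set D0 \<or> w \<in> set (FU' L) \<or> w \<in> set (FG' M) \<or> w = iv 1 1 \<or>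
       w = iv 2 (M - 1) @ [ee 1] \<or> (\<exists>b. w \<in> set (blk M b))"
      unfolding FQ'_def by auto
    thus ?thesis
    proof (elim disjE exE)
      fix b assume "w \<in> set (blk M b)"
      thus ?thesis using blk_letters by blast
    qed (use D0 memFU'[of w L] memFG'[of w M] in \<open>auto simp: uw_set iv_set\<close>)
  qed
  thus ?thesis by auto
qed

lemma good_T:
  assumes "2 \<le> S"
  shows "good_seq [] (FT S k r)"
proof -
  note p = params[OF assms]
  let ?A = "FU (LL S)" and ?B = "FG (MM S)" and ?C = "FQ (MM S) (BB S)" and ?P = "FP k r"
  have "good_seq [] ?A" by (rule gU)
  moreover have "good_seq ?A ?B" by (rule gG)
  moreover have "good_seq (?A @ ?B) ?C" by (rule gQ) (use p in simp)
  moreover have "good_seq (?A @ ?B @ ?C) ?P"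
    by (rule gP) (use noletters_T in blast)
  ultimately show ?thesis unfolding FT_def good_seq_append by simp
qed

lemma good_T':
  assumes "2 \<le> S" and D0: "\<forall>w\<in>set D0. w = [uu 0]"
  shows "good_seq D0 (FT' S k r)"
proof -
  note p = params[OF assms(1)]
  let ?A = "FU' (LL S)" and ?B = "FG' (MM S)" and ?C = "FQ' (MM S) (BB S)" and ?P = "FP k r"
  have "good_seq D0 ?A" by (rule gU'[OF D0])
  moreover have "good_seq (D0 @ ?A) ?B" by (rule gG'[OF D0]) (use p in simp)
  moreover have "good_seq (D0 @ ?A @ ?B) ?C" by (rule gQ'[OF D0]) (use p in simp_all)
  moreover have "good_seq (D0 @ ?A @ ?B @ ?C) ?P"
    by (rule gP) (use noletters_T'[OF D0] in blast)
  ultimately show ?thesis unfolding FT'_def good_seq_append by simp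
qed

lemma text_eq:
  assumes "2 \<le> S"
  shows "concat (FT S k r) = uu 1 # concat (FT' S k r)"
proof -
  note p = params[OF assms]
  have "concat (FU (LL S)) = uu 1 # concat (FU' (LL S))" by (rule concat_FU) (use p in simp)
  moreover have "concat (FG' (MM S)) = concat (FG (MM S))" by (rule concat_FG)
  moreover have "concat (FQ' (MM S) (BB S)) = concat (FQ (MM S) (BB S))"
    by (rule concat_FQ) (use p in simp_all)
  ultimately show ?thesis unfolding FT_def FT'_def by simp
qed

lemma len_FT: "length (FT S k r) = LL S + 2 * MM S + BB S + k + r"
proof -
  have "length (FG M) = 2 * M" for M
    unfolding FG_def by (subst len_concat_const[where c=2]) simp_all
  thus ?thesis unfolding FT_def FU_def FQ_def FP_def by simp
qed

lemma phase_bound: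
  assumes "b \<le> BB S"
  shows "phase b \<le> 2 * S"
proof (rule phase_le)
  have "2 * base (Suc (2 * S)) + Suc (2 * S) = Suc (2 * S) * Suc (2 * S) + 4" by (rule base_closed)
  hence "base (Suc (2 * S)) = BB S + 1" unfolding BB_def by (simp add: algebra_simps)
  thus "b < base (Suc (2 * S))" using assms by simp
qed

lemma len_FT':
  assumes "2 \<le> S"
  shows "(2 * S * S + S) * (S - 1) \<le> length (FT' S k r)"
proof -
  note p = params[OF assms]
  let ?M = "MM S" and ?B = "BB S"
  have c: "S - 1 \<le> length (blk ?M b)" if b: "b \<in> set [2..<Suc ?B]" for b
  proof -
    have b2: "2 \<le> b" "b \<le> ?B" using b by auto
    have ph: "1 \<le> phase b" using phase_props[OF b2(1)] by simp
    obtain t where t: "S = Suc t" using assms by (cases S) auto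
    have "(S - 1) * (2 * S) + ?B \<le> ?M" unfolding MM_def BB_def t
      by (simp add: algebra_simps)
    hence "(S - 1) * (2 * S) \<le> ?M - ?B" by simp
    hence "S - 1 \<le> (?M - ?B) div (2 * S)"
      using assms by (simp add: less_eq_div_iff_mult_less_eq)
    also have "\<dots> \<le> (?M - b) div (2 * S)" using b2 by (simp add: div_le_mono)
    also have "\<dots> \<le> (?M - b) div phase b"
      by (intro div_le_mono2) (use ph phase_bound[OF b2(2)] in auto)
    also have "\<dots> \<le> length (blk ?M b)" by (simp add: blk_len)
    finally show ?thesis .
  qed
  have "(S - 1) * length [2..<Suc ?B] \<le> length (concat (map (blk ?M) [2..<Suc ?B]))"
    by (rule len_concat_ge) (rule c)
  moreover have "length [2..<Suc ?B] = 2 * S * S + S" unfolding BB_def using assms by simp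
  moreover have "length (concat (map (blk ?M) [2..<Suc ?B])) \<le> length (FT' S k r)"
    unfolding FT'_def FQ'_def by simp
  ultimately show ?thesis by (simp add: mult.commute)
qed


lemma pad_exists: "\<exists>k r. 2 * (p::nat) = k * (k + 1) + 2 * r \<and> r \<le> k"
proof (induction p)
  case 0 thus ?case by (intro exI[of _ 0]) simp
next
  case (Suc p)
  then obtain k r where kr: "2 * p = k * (k + 1) + 2 * r" "r \<le> k" by blast
  show ?case
  proof (cases "r < k")
    case True thus ?thesis using kr by (intro exI[of _ k] exI[of _ "Suc r"]) simp
  next
    case False
    hence "r = k" using kr by simp
    thus ?thesis using kr by (intro exI[of _ "Suc k"] exI[of _ 0]) (simp add: algebra_simps)
  qed
qed

lemma n0_step: "n0 (Suc S) \<le> n0 S + 500 * (S * S * S) + 500"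
proof -
  have "n0 (Suc S) = n0 S + (96 * (S * S * S) + 156 * (S * S) + 144 * S + 47)"
    unfolding n0_def by (simp add: algebra_simps)
  moreover have "S * S \<le> S * S * S + 1" 
    by (cases S) (simp_all add: algebra_simps)
  moreover have "S \<le> S * S * S + 1" 
    by (cases S) (simp_all add: algebra_simps)
  ultimately show ?thesis by linarith
qed

lemma n0_upper: "1 \<le> S \<Longrightarrow> n0 (Suc S) \<le> 625 * (S * S * S * S)"
proof -
  assume S: "1 \<le> S"
  have a: "S * S * S \<le> S * S * S * S" using S by simp
  have b: "S * S \<le> S * S * S" using S by simp
  have c: "S \<le> S * S" using S by simp
  have "n0 (Suc S) = 24 * (S * S * S * S) + 100 * (S * S * S) + 174 * (S * S) + 145 * S + 49"
    unfolding n0_def by (simp add: algebra_simps)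
  thus ?thesis using a b c S by linarith
qed

lemma choose_S:
  assumes "n0 N \<le> n"
  shows "\<exists>S. N \<le> S \<and> n0 S \<le> n \<and> n < n0 (Suc S)"
proof -
  let ?P = "\<lambda>S. n0 S \<le> n"
  have bnd: "\<And>y. ?P y \<Longrightarrow> y \<le> n" unfolding n0_def by auto
  define S where "S = (GREATEST S. ?P S)"
  have "?P S" unfolding S_def by (rule GreatestI_nat[where P="?P", OF assms bnd])
  moreover have "N \<le> S" unfolding S_def by (rule Greatest_le_nat[where P="?P", OF assms bnd])
  moreover have "n < n0 (Suc S)"
  proof (rule ccontr)
    assume "\<not> n < n0 (Suc S)"
    hence "Suc S \<le> S" unfolding S_def by (intro Greatest_le_nat[where P="?P", OF _ bnd]) simp
    thus False by simp
  qed
  ultimately show ?thesis by blast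
qed

lemma construct:
  assumes "n0 2000 \<le> n"
  shows "\<exists>S R. 2000 \<le> S \<and> length (uu 1 # R) = n \<and>
     real n \<le> 625 * (real S * real S * real S * real S) \<and>
     1 \<le> z78 (uu 1 # R) \<and> z78 (uu 1 # R) \<le> 17 * (S * S) \<and>
     2 * (S * S) * (S - 1) \<le> z78 R \<and> 2 * (S * S) * (S - 1) \<le> z78 (uu 0 # R)"
proof -
  obtain S where S: "2000 \<le> S" "n0 S \<le> n" "n < n0 (Suc S)" using choose_S[OF assms] by blast
  have S2: "2 \<le> S" using S by simp
  obtain k r where kr: "2 * (n - n0 S) = k * (k + 1) + 2 * r" "r \<le> k"
    using pad_exists by blast
  define R where "R = concat (FT' S k r)"
  have TR: "concat (FT S k r) = uu 1 # R" unfolding R_def by (rule text_eq[OF S2])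
  have "2 * length (concat (FT S k r)) =
     2 * length (concat (FU (LL S) @ FG (MM S) @ FQ (MM S) (BB S))) + 2 * length (concat (FP k r))"
    unfolding FT_def by simp
  also have "\<dots> = 2 * n" using n0_eq[of S] lenFP[of k r] kr S by simp
  finally have len: "length (uu 1 # R) = n" using TR by simp
  have zT: "z78 (uu 1 # R) = LL S + 2 * MM S + BB S + k + r"
    using z78_good[OF good_T[OF S2, of k r]] TR len_FT by simp
  have kS: "k \<le> S * S"
  proof (rule ccontr)
    assume "\<not> k \<le> S * S"
    hence "(S * S) * (S * S) \<le> k * k" by (intro mult_le_mono) simp_all
    also have "k * k \<le> 2 * (n - n0 S)" using kr by (simp add: algebra_simps)
    also have "\<dots> < 2 * (500 * (S * S * S) + 500)" using S n0_step[of S] by simp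
    also have "\<dots> \<le> (S * S) * (S * S)"
    proof -
      have "2000 * (S * S * S) \<le> S * (S * S * S)" using S by (intro mult_le_mono1) simp
      moreover have "1000 \<le> S * S * S"
      proof -
        have "1 \<le> S * S" using S by simp
        hence "S \<le> S * S * S" by simp
        thus ?thesis using S by linarith
      qed
      moreover have "2 * (500 * (S * S * S) + 500) = 1000 * (S * S * S) + 1000" by simp
      moreover have "(S * S) * (S * S) = S * (S * S * S)" by (simp add: mult.assoc)
      ultimately show ?thesis by linarith
    qed
    finally show False by simp
  qed
  have "z78 (uu 1 # R) \<le> 17 * (S * S)"
  proof -
    have a: "2 * S \<le> S * S" using mult_le_mono1[OF S2, of S] by simp
    have "z78 (uu 1 # R) = 14 * (S * S) + S + 2 + k + r" unfolding zT LL_def MM_def BB_def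
      by (simp add: algebra_simps)
    thus ?thesis using a S2 kS kr(2) by linarith
  qed
  moreover have "1 \<le> z78 (uu 1 # R)" unfolding zT LL_def by simp
  moreover have "2 * (S * S) * (S - 1) \<le> z78 R"
  proof -
    have "z78 R = length (FT' S k r)" unfolding R_def
      by (rule z78_good) (rule good_T'[OF S2], simp)
    moreover have e: "2 * (S * S) * (S - 1) \<le> (2 * S * S + S) * (S - 1)"
      by (intro mult_le_mono1) simp
    ultimately show ?thesis using order_trans[OF e len_FT'[OF S2, of k r]] by simp
  qed
  moreover have "2 * (S * S) * (S - 1) \<le> z78 (uu 0 # R)"
  proof -
    have g: "good_seq [] ([uu 0] # FT' S k r)"
      using good_T'[OF S2, of "[[uu 0]]" k r] by (simp add: good_def)
    have "z78 (uu 0 # R) = length ([uu 0] # FT' S k r)"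
      using z78_good[OF g] unfolding R_def by simp
    moreover have e: "2 * (S * S) * (S - 1) \<le> (2 * S * S + S) * (S - 1)"
      by (intro mult_le_mono1) simp
    ultimately show ?thesis using order_trans[OF e len_FT'[OF S2, of k r]] by simp
  qed
  moreover have "real n \<le> 625 * (real S * real S * real S * real S)"
  proof -
    have "n \<le> 625 * (S * S * S * S)" using S n0_upper[of S] by simp
    hence "real n \<le> real (625 * (S * S * S * S))" by (simp only: of_nat_le_iff)
    thus ?thesis by simp
  qed
  ultimately show ?thesis using S len by blast
qed


lemma root_bounds:
  fixes n S :: real
  assumes "0 \<le> n" "n \<le> 625 * (S * S * S * S)" "0 < S"
  shows "n powr (1/4) \<le> 5 * S" "n powr (3/4) \<le> 125 * (S * S * S)"
proof -
  define x where "x = 5 * S"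
  have x: "0 < x" using assms unfolding x_def by simp
  have x4: "x powr 4 = 625 * (S * S * S * S)"
    using powr_realpow[OF x, of 4] unfolding x_def by (simp add: eval_nat_numeral)
  have "n powr (1/4) \<le> (x powr 4) powr (1/4)"
    by (rule powr_mono2) (use assms x4 in simp_all)
  also have "\<dots> = x powr (4 * (1/4))" by (rule powr_powr)
  also have "\<dots> = x" using x by simp
  finally show "n powr (1/4) \<le> 5 * S" unfolding x_def .
  have "n powr (3/4) \<le> (x powr 4) powr (3/4)"
    by (rule powr_mono2) (use assms x4 in simp_all)
  also have "\<dots> = x powr (4 * (3/4))" by (rule powr_powr)
  also have "\<dots> = x powr 3" by simp
  also have "\<dots> = x ^ 3" using powr_realpow[OF x, of 3] by simp
  also have "\<dots> = 125 * (S * S * S)" unfolding x_def by (simp add: eval_nat_numeral)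
  finally show "n powr (3/4) \<le> 125 * (S * S * S)" .
qed

lemma key_real:
  fixes S zT zP n :: real
  assumes S: "2000 \<le> S" and z1: "1 \<le> zT" "zT \<le> 17 * (S * S)"
    and zP: "2 * (S * S) * (S - 1) \<le> zP" and n: "0 \<le> n" "n \<le> 625 * (S * S * S * S)"
  shows "(1/85) * n powr (1/4) \<le> zP / zT"
    "(1/72) * zT powr (3/2) \<le> zP - zT"
    "(1/125) * n powr (3/4) \<le> zP - zT"
proof -
  have S0: "0 < S" using S by simp
  have SS: "0 < S * S" using S0 by simp
  have SSS: "2000 * (S * S) \<le> S * S * S" using mult_right_mono[OF S, of "S * S"] SS
    by (simp add: algebra_simps)
  have zPe: "2 * (S * S * S) - 2 * (S * S) \<le> zP" using zP by (simp add: algebra_simps)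
  have A: "S * S * S \<le> zP" using zPe SSS SS by linarith
  have D: "S * S * S \<le> zP - zT" using zPe SSS SS z1 by linarith
  note rb = root_bounds[OF n S0]
  show "(1/85) * n powr (1/4) \<le> zP / zT"
  proof -
    have "(1/85) * n powr (1/4) \<le> S / 17" using rb(1) by simp
    also have "S / 17 = (S * S * S) / (17 * (S * S))" using SS by (simp add: field_simps)
    also have "\<dots> \<le> zP / (17 * (S * S))" by (rule divide_right_mono[OF A]) (use SS in simp)
    also have "\<dots> \<le> zP / zT"
    proof (rule divide_left_mono)
      show "zT \<le> 17 * (S * S)" using z1 by simp
      have "0 < S * S * S" using SS S0 by simp
      thus "0 \<le> zP" using A by linarith
      show "0 < 17 * (S * S) * zT" using SS z1 by simp
    qed
    finally show ?thesis .
  qed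
  show "(1/72) * zT powr (3/2) \<le> zP - zT"
  proof -
    have zT0: "0 < zT" using z1 by simp
    have "zT powr (3/2) = zT powr (1 + 1/2)" by simp
    also have "\<dots> = zT powr 1 * zT powr (1/2)" by (rule powr_add)
    also have "\<dots> = zT * sqrt zT" using zT0 by (simp add: powr_half_sqrt)
    also have "\<dots> \<le> (17 * (S * S)) * (4.2 * S)"
    proof (rule mult_mono)
      have "sqrt zT \<le> sqrt (17 * (S * S))" using z1 by simp
      also have "\<dots> = sqrt 17 * S" using S0 by (simp add: real_sqrt_mult)
      also have "\<dots> \<le> 4.2 * S"
      proof -
        have "sqrt 17 \<le> sqrt (4.2 ^ 2)" by (subst real_sqrt_le_iff) (simp add: power2_eq_square)
        hence "sqrt 17 \<le> 4.2" by simp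
        thus ?thesis using S0 by simp
      qed
      finally show "sqrt zT \<le> 4.2 * S" .
    qed (use z1 in simp_all)
    finally have "zT powr (3/2) \<le> 71.4 * (S * S * S)" by (simp add: algebra_simps)
    moreover have "0 < S * S * S" using SS S0 by simp
    ultimately have "(1/72) * zT powr (3/2) \<le> S * S * S" by linarith
    thus ?thesis using D by linarith
  qed
  show "(1/125) * n powr (3/4) \<le> zP - zT" using rb(2) D by simp
qed


lemma real_div_le: "real a / real b \<le> real a"
proof (cases "b = 0")
  case True thus ?thesis by simp
next
  case False
  hence "real a / real b \<le> real a / 1" by (intro divide_left_mono) simp_all
  thus ?thesis by simp
qed

lemma sup_ge_lemma:
  fixes X :: "real set"
  assumes "x \<in> X" "\<forall>y\<in>X. y \<le> B"
  shows "x \<le> Sup X"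
  by (rule cSup_upper[OF assms(1)]) (use assms(2) in \<open>auto simp: bdd_above_def\<close>)

lemma MS_sub_ge:
  fixes T T' :: "nat list"
  assumes "length T = n" "length T' = n" "ed T T' = 1"
  shows "real (z78 T') / real (z78 T) \<le> MS_sub (z78 :: nat list \<Rightarrow> nat) n"
  unfolding MS_sub_def
  apply (rule sup_ge_lemma[where B="real n"])
  subgoal using assms by blast
  subgoal
  proof (intro ballI)
    fix y assume "y \<in> {real (z78 T') / real (z78 T) |(T :: nat list) (T' :: nat list).
      length T = n \<and> length T' = n \<and> ed T T' = 1}"
    then obtain A A' :: "nat list" where "y = real (z78 A') / real (z78 A)" "length A' = n" by blast
    thus "y \<le> real n" using real_div_le[of "z78 A'" "z78 A"] z78_le[of A'] by simp
  qed
  done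

lemma MS_del_ge:
  fixes T T' :: "nat list"
  assumes "length T = n" "length T' = n - 1" "ed T T' = 1"
  shows "real (z78 T') / real (z78 T) \<le> MS_del (z78 :: nat list \<Rightarrow> nat) n"
  unfolding MS_del_def
  apply (rule sup_ge_lemma[where B="real n"])
  subgoal using assms by blast
  subgoal
  proof (intro ballI)
    fix y assume "y \<in> {real (z78 T') / real (z78 T) |(T :: nat list) (T' :: nat list).
      length T = n \<and> length T' = n - 1 \<and> ed T T' = 1}"
    then obtain A A' :: "nat list" where "y = real (z78 A') / real (z78 A)" "length A' = n - 1" by blast
    thus "y \<le> real n" using real_div_le[of "z78 A'" "z78 A"] z78_le[of A'] by simp
  qed
  done

lemma AS_sub_ge:
  fixes T T' :: "nat list"
  assumes "length T = n" "length T' = n" "ed T T' = 1"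
  shows "real (z78 T') - real (z78 T) \<le> AS_sub (z78 :: nat list \<Rightarrow> nat) n"
  unfolding AS_sub_def
  apply (rule sup_ge_lemma[where B="real n"])
  subgoal using assms by blast
  subgoal
  proof (intro ballI)
    fix y assume "y \<in> {real (z78 T') - real (z78 T) |(T :: nat list) (T' :: nat list).
      length T = n \<and> length T' = n \<and> ed T T' = 1}"
    then obtain A A' :: "nat list" where "y = real (z78 A') - real (z78 A)" "length A' = n" by blast
    thus "y \<le> real n" using z78_le[of A'] by simp
  qed
  done

lemma AS_del_ge:
  fixes T T' :: "nat list"
  assumes "length T = n" "length T' = n - 1" "ed T T' = 1"
  shows "real (z78 T') - real (z78 T) \<le> AS_del (z78 :: nat list \<Rightarrow> nat) n"
  unfolding AS_del_def
  apply (rule sup_ge_lemma[where B="real n"])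
  subgoal using assms by blast
  subgoal
  proof (intro ballI)
    fix y assume "y \<in> {real (z78 T') - real (z78 T) |(T :: nat list) (T' :: nat list).
      length T = n \<and> length T' = n - 1 \<and> ed T T' = 1}"
    then obtain A A' :: "nat list" where "y = real (z78 A') - real (z78 A)" "length A' = n - 1" by blast
    thus "y \<le> real n" using z78_le[of A'] by simp
  qed
  done

lemma witnesses:
  assumes "n0 2000 \<le> n"
  shows "\<exists>T Ts Td :: nat list. length T = n \<and> length Ts = n \<and> length Td = n - 1 \<and>
    ed T Ts = 1 \<and> ed T Td = 1 \<and>
    (\<forall>T' \<in> {Ts, Td}.
      (1/85) * real n powr (1/4) \<le> real (z78 T') / real (z78 T) \<and>
      (1/72) * real (z78 T) powr (3/2) \<le> real (z78 T') - real (z78 T) \<and>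
      (1/125) * real n powr (3/4) \<le> real (z78 T') - real (z78 T))"
proof -
  obtain S R where H: "2000 \<le> S" "length (uu 1 # R) = n"
     "real n \<le> 625 * (real S * real S * real S * real S)"
     "1 \<le> z78 (uu 1 # R)" "z78 (uu 1 # R) \<le> 17 * (S * S)"
     "2 * (S * S) * (S - 1) \<le> z78 R" "2 * (S * S) * (S - 1) \<le> z78 (uu 0 # R)"
    using construct[OF assms] by blast
  let ?T = "uu 1 # R"
  have rS: "2000 \<le> real S" using H(1) by simp
  have r1: "1 \<le> real (z78 ?T)" using H(4) by simp
  have r2: "real (z78 ?T) \<le> 17 * (real S * real S)"
  proof -
    have "real (z78 ?T) \<le> real (17 * (S * S))" using H(5) by (simp only: of_nat_le_iff)
    thus ?thesis by simp
  qed
  have conv: "2 * (real S * real S) * (real S - 1) \<le> real x" if "2 * (S * S) * (S - 1) \<le> x" for x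
  proof -
    have "real (2 * (S * S) * (S - 1)) \<le> real x" using that by (simp only: of_nat_le_iff)
    thus ?thesis using H(1) by (simp add: of_nat_diff)
  qed
  have n0: "0 \<le> real n" by simp
  have K: "(1/85) * real n powr (1/4) \<le> real (z78 T') / real (z78 ?T) \<and>
      (1/72) * real (z78 ?T) powr (3/2) \<le> real (z78 T') - real (z78 ?T) \<and>
      (1/125) * real n powr (3/4) \<le> real (z78 T') - real (z78 ?T)"
    if "2 * (S * S) * (S - 1) \<le> z78 T'" for T'
    using key_real[OF rS r1 r2 conv[OF that] n0 H(3)] by simp
  show ?thesis
    apply (rule exI[of _ ?T], rule exI[of _ "uu 0 # R"], rule exI[of _ R])
    using H K[OF H(6)] K[OF H(7)] ed_sub[of "uu 1" "uu 0" R] ed_del[of "uu 1" R]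
    by (simp add: uu_def)
qed


theorem mainTheorem17:
  shows
   "(\<lambda>n. MS_sub (z78 :: nat list \<Rightarrow> nat) n) \<in> \<Omega>(\<lambda>n. real n powr (1/4)) \<and>
    (\<exists>c>0. \<forall>\<^sub>F n in sequentially. \<exists>T T' :: nat list.
        length T = n \<and> length T' = n \<and> ed T T' = 1 \<and>
        real (z78 T') - real (z78 T) \<ge> c * real (z78 T) powr (3/2)) \<and>
    (\<lambda>n. AS_sub (z78 :: nat list \<Rightarrow> nat) n) \<in> \<Omega>(\<lambda>n. real n powr (3/4)) \<and>
    (\<lambda>n. MS_del (z78 :: nat list \<Rightarrow> nat) n) \<in> \<Omega>(\<lambda>n. real n powr (1/4)) \<and>
    (\<exists>c>0. \<forall>\<^sub>F n in sequentially. \<exists>T T' :: nat list.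
        length T = n \<and> length T' = n - 1 \<and> ed T T' = 1 \<and>
        real (z78 T') - real (z78 T) \<ge> c * real (z78 T) powr (3/2)) \<and>
    (\<lambda>n. AS_del (z78 :: nat list \<Rightarrow> nat) n) \<in> \<Omega>(\<lambda>n. real n powr (3/4))"
proof -
  define N where "N = n0 2000"
  have W: "\<exists>T Ts Td :: nat list. length T = n \<and> length Ts = n \<and> length Td = n - 1 \<and>
    ed T Ts = 1 \<and> ed T Td = 1 \<and>
    (\<forall>T' \<in> {Ts, Td}.
      (1/85) * real n powr (1/4) \<le> real (z78 T') / real (z78 T) \<and>
      (1/72) * real (z78 T) powr (3/2) \<le> real (z78 T') - real (z78 T) \<and>
      (1/125) * real n powr (3/4) \<le> real (z78 T') - real (z78 T))" if "N \<le> n" for n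
    using witnesses that unfolding N_def by blast
  have nn: "norm (real n powr a) = real n powr a" for n :: nat and a :: real by simp
  have P1: "(\<lambda>n. MS_sub (z78 :: nat list \<Rightarrow> nat) n) \<in> \<Omega>(\<lambda>n. real n powr (1/4))"
  proof (rule landau_omega.bigI[of "1/85"])
    show "(0::real) < 1/85" by simp
    show "\<forall>\<^sub>F n in at_top. (1/85) * norm (real n powr (1/4)) \<le> norm (MS_sub (z78 :: nat list \<Rightarrow> nat) n)"
      unfolding eventually_at_top_linorder
    proof (intro exI[of _ N] allI impI)
      fix n assume "N \<le> n"
      then obtain T Ts Td :: "nat list" where h: "length T = n" "length Ts = n" "ed T Ts = 1"
        "(1/85) * real n powr (1/4) \<le> real (z78 Ts) / real (z78 T)"
        using W by blast
      have "(1/85) * real n powr (1/4) \<le> MS_sub (z78 :: nat list \<Rightarrow> nat) n"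
        using h(4) MS_sub_ge[OF h(1-3)] by linarith
      thus "(1/85) * norm (real n powr (1/4)) \<le> norm (MS_sub (z78 :: nat list \<Rightarrow> nat) n)" by simp
    qed
  qed
  have P4: "(\<lambda>n. MS_del (z78 :: nat list \<Rightarrow> nat) n) \<in> \<Omega>(\<lambda>n. real n powr (1/4))"
  proof (rule landau_omega.bigI[of "1/85"])
    show "(0::real) < 1/85" by simp
    show "\<forall>\<^sub>F n in at_top. (1/85) * norm (real n powr (1/4)) \<le> norm (MS_del (z78 :: nat list \<Rightarrow> nat) n)"
      unfolding eventually_at_top_linorder
    proof (intro exI[of _ N] allI impI)
      fix n assume "N \<le> n"
      then obtain T Ts Td :: "nat list" where h: "length T = n" "length Td = n - 1" "ed T Td = 1"
        "(1/85) * real n powr (1/4) \<le> real (z78 Td) / real (z78 T)"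
        using W by blast
      have "(1/85) * real n powr (1/4) \<le> MS_del (z78 :: nat list \<Rightarrow> nat) n"
        using h(4) MS_del_ge[OF h(1-3)] by linarith
      thus "(1/85) * norm (real n powr (1/4)) \<le> norm (MS_del (z78 :: nat list \<Rightarrow> nat) n)" by simp
    qed
  qed
  have P3: "(\<lambda>n. AS_sub (z78 :: nat list \<Rightarrow> nat) n) \<in> \<Omega>(\<lambda>n. real n powr (3/4))"
  proof (rule landau_omega.bigI[of "1/125"])
    show "(0::real) < 1/125" by simp
    show "\<forall>\<^sub>F n in at_top. (1/125) * norm (real n powr (3/4)) \<le> norm (AS_sub (z78 :: nat list \<Rightarrow> nat) n)"
      unfolding eventually_at_top_linorder
    proof (intro exI[of _ N] allI impI)
      fix n assume "N \<le> n"
      then obtain T Ts Td :: "nat list" where h: "length T = n" "length Ts = n" "ed T Ts = 1"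
        "(1/125) * real n powr (3/4) \<le> real (z78 Ts) - real (z78 T)"
        using W by blast
      have "(1/125) * real n powr (3/4) \<le> AS_sub (z78 :: nat list \<Rightarrow> nat) n"
        using h(4) AS_sub_ge[OF h(1-3)] by linarith
      thus "(1/125) * norm (real n powr (3/4)) \<le> norm (AS_sub (z78 :: nat list \<Rightarrow> nat) n)" by simp
    qed
  qed
  have P6: "(\<lambda>n. AS_del (z78 :: nat list \<Rightarrow> nat) n) \<in> \<Omega>(\<lambda>n. real n powr (3/4))"
  proof (rule landau_omega.bigI[of "1/125"])
    show "(0::real) < 1/125" by simp
    show "\<forall>\<^sub>F n in at_top. (1/125) * norm (real n powr (3/4)) \<le> norm (AS_del (z78 :: nat list \<Rightarrow> nat) n)"
      unfolding eventually_at_top_linorder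
    proof (intro exI[of _ N] allI impI)
      fix n assume "N \<le> n"
      then obtain T Ts Td :: "nat list" where h: "length T = n" "length Td = n - 1" "ed T Td = 1"
        "(1/125) * real n powr (3/4) \<le> real (z78 Td) - real (z78 T)"
        using W by blast
      have "(1/125) * real n powr (3/4) \<le> AS_del (z78 :: nat list \<Rightarrow> nat) n"
        using h(4) AS_del_ge[OF h(1-3)] by linarith
      thus "(1/125) * norm (real n powr (3/4)) \<le> norm (AS_del (z78 :: nat list \<Rightarrow> nat) n)" by simp
    qed
  qed
  have P2: "\<exists>c>0. \<forall>\<^sub>F n in sequentially. \<exists>T T' :: nat list.
        length T = n \<and> length T' = n \<and> ed T T' = 1 \<and>
        real (z78 T') - real (z78 T) \<ge> c * real (z78 T) powr (3/2)"
  proof (intro exI[of _ "1/72"] conjI)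
    show "(0::real) < 1/72" by simp
    show "\<forall>\<^sub>F n in sequentially. \<exists>T T' :: nat list.
        length T = n \<and> length T' = n \<and> ed T T' = 1 \<and>
        real (z78 T') - real (z78 T) \<ge> 1/72 * real (z78 T) powr (3/2)"
      unfolding eventually_sequentially
    proof (intro exI[of _ N] allI impI)
      fix n assume "N \<le> n"
      then obtain T Ts Td :: "nat list" where h: "length T = n" "length Ts = n" "ed T Ts = 1"
        "(1/72) * real (z78 T) powr (3/2) \<le> real (z78 Ts) - real (z78 T)"
        using W by blast
      thus "\<exists>T T' :: nat list. length T = n \<and> length T' = n \<and> ed T T' = 1 \<and>
        real (z78 T') - real (z78 T) \<ge> 1/72 * real (z78 T) powr (3/2)" by blast
    qed
  qed
  have P5: "\<exists>c>0. \<forall>\<^sub>F n in sequentially. \<exists>T T' :: nat list.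
        length T = n \<and> length T' = n - 1 \<and> ed T T' = 1 \<and>
        real (z78 T') - real (z78 T) \<ge> c * real (z78 T) powr (3/2)"
  proof (intro exI[of _ "1/72"] conjI)
    show "(0::real) < 1/72" by simp
    show "\<forall>\<^sub>F n in sequentially. \<exists>T T' :: nat list.
        length T = n \<and> length T' = n - 1 \<and> ed T T' = 1 \<and>
        real (z78 T') - real (z78 T) \<ge> 1/72 * real (z78 T) powr (3/2)"
      unfolding eventually_sequentially
    proof (intro exI[of _ N] allI impI)
      fix n assume "N \<le> n"
      then obtain T Ts Td :: "nat list" where h: "length T = n" "length Td = n - 1" "ed T Td = 1"
        "(1/72) * real (z78 T) powr (3/2) \<le> real (z78 Td) - real (z78 T)"
        using W by blast
      thus "\<exists>T T' :: nat list. length T = n \<and> length T' = n - 1 \<and> ed T T' = 1 \<and>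
        real (z78 T') - real (z78 T) \<ge> 1/72 * real (z78 T) powr (3/2)" by blast
    qed
  qed
  show ?thesis using P1 P2 P3 P4 P5 P6 by blast
qed

end
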